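(* Let $E_0>0$ and let $\phi$ satisfy the standing assumptions below with $n\le3$. Then there exists $\delta>0$ such that for all $V\in(E_0-\delta,E_0)$, $\left|\frac{\xi_{1/2}(V)}{\xi_{-1/2}(V)}\cdot\frac{\zeta(V)}{\xi_{-1/2}(V)}\right|<\frac45$.
   Context: Standing assumptions on $\phi:(-\infty,1]\to\mathbb R_+$: $\phi(x)=0$ for $x<0$, $\phi$ analytic on $[0,1]$, and there is $n\in\{0,1,2,\dots\}$ with $\phi'(0)=\dots=\phi^{(n-1)}(0)=0$, $\phi^{(n)}(0)>0$. Put $\Phi(E)=\phi(1-E/E_0)$. For $\kappa\in\{\frac32,\frac12,-\frac12\}$ and $V\in(0,E_0]$: $\xi_\kappa(V)=\frac{4\pi}{V}\int_V^{E_0}\Phi(E)\left(\frac{E^2}{V^2}-1\right)^\kappa dE$. For $V\in(0,E_0)$: $\zeta(V)=-4\pi\frac{d}{dV}\left(\int_V^{E_0}\Phi(E)\left(\frac{E^2}{V^2}-1\right)^{-1/2}dE\right)$, so that $\xi_{-1/2}'(V)=-\frac1V(\xi_{-1/2}(V)+\zeta(V))$. *)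

theory Defs
  imports "HOL-Analysis.Analysis"
begin

definition real_analytic_on_set :: "(real \<Rightarrow> real) \<Rightarrow> real set \<Rightarrow> bool" where
  "real_analytic_on_set f S \<longleftrightarrow>
     (\<forall>x0\<in>S. \<exists>r>0. \<exists>a::nat \<Rightarrow> real.
        \<forall>x\<in>S. \<bar>x - x0\<bar> < r \<longrightarrow> (\<lambda>k. a k * (x - x0) ^ k) sums f x)"

text \<open>Standing assumptions on phi, with the order n of vanishing at 0.
  Higher derivatives are taken within [0,1] (phi jumps at 0 when n = 0):
  D k is the k-th derivative of phi restricted to [0,1].\<close>
definition standing_assms :: "(real \<Rightarrow> real) \<Rightarrow> nat \<Rightarrow> bool" where
  "standing_assms phi n \<longleftrightarrow>
     (\<forall>x\<le>1. 0 \<le> phi x) \<and>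
     (\<forall>x<0. phi x = 0) \<and>
     real_analytic_on_set phi {0..1} \<and>
     (\<exists>D :: nat \<Rightarrow> real \<Rightarrow> real.
        (\<forall>x\<in>{0..1}. D 0 x = phi x) \<and>
        (\<forall>k. \<forall>x\<in>{0..1}. (D k has_real_derivative D (Suc k) x) (at x within {0..1})) \<and>
        (\<forall>k<n. D k 0 = 0) \<and> D n 0 > 0)"

definition Phi :: "real \<Rightarrow> (real \<Rightarrow> real) \<Rightarrow> real \<Rightarrow> real" where
  "Phi E0 phi E = phi (1 - E / E0)"

text \<open>xi_kappa(V) = 4 pi / V * int_V^E0 Phi(E) (E^2/V^2 - 1)^kappa dE
  (an improper but absolutely convergent integral for kappa = -1/2).\<close>
definition xi :: "real \<Rightarrow> real \<Rightarrow> (real \<Rightarrow> real) \<Rightarrow> real \<Rightarrow> real" where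
  "xi kappa E0 phi V =
     4 * pi / V * integral {V..E0} (\<lambda>E. Phi E0 phi E * (E\<^sup>2 / V\<^sup>2 - 1) powr kappa)"

definition zeta :: "real \<Rightarrow> (real \<Rightarrow> real) \<Rightarrow> real \<Rightarrow> real" where
  "zeta E0 phi V =
     - 4 * pi * deriv (\<lambda>W. integral {W..E0} (\<lambda>E. Phi E0 phi E * (E\<^sup>2 / W\<^sup>2 - 1) powr (-1/2))) V"

end

theory Submission
  imports Defs
begin


lemma cont_piece:
  fixes f :: "real \<Rightarrow> real"
  assumes c: "continuous_on {0<..1} f" and l: "(f \<longlongrightarrow> L) (at_right 0)"
  shows "continuous_on {0..1} (\<lambda>s. if s = 0 then L else f s)"
  unfolding continuous_on_eq_continuous_within
proof
  fix x :: real assume x: "x \<in> {0..1}"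
  show "continuous (at x within {0..1}) (\<lambda>s. if s = 0 then L else f s)"
  proof (cases "x = 0")
    case True
    have "((\<lambda>s. if s = 0 then L else f s) \<longlongrightarrow> L) (at_right 0)"
      using l by (rule tendsto_cong[THEN iffD1, rotated]) (auto simp: eventually_at_right_field intro!: exI[of _ 1])
    then show ?thesis using True
      by (simp add: continuous_within at_within_Icc_at_right)
  next
    case False
    then have x0: "0 < x" using x by auto
    have eq: "at x within {0..1} = at x within {0<..1}"
      by (rule at_within_nhd[of _ "{0<..<2}"]) (use x0 x in auto)
    have "continuous_on {0<..1} (\<lambda>s. if s = 0 then L else f s)"
      using c by (rule continuous_on_eq) auto
    then have "continuous (at x within {0<..1}) (\<lambda>s. if s = 0 then L else f s)"
      using x0 x by (simp add: continuous_on_eq_continuous_within)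
    then show ?thesis by (simp add: eq)
  qed
qed

locale stdphi =
  fixes phi :: "real \<Rightarrow> real" and n :: nat and D :: "nat \<Rightarrow> real \<Rightarrow> real"
  assumes D0: "\<forall>x\<in>{0..1}. D 0 x = phi x"
  and Dd: "\<forall>k. \<forall>x\<in>{0..1}. (D k has_real_derivative D (Suc k) x) (at x within {0..1})"
  and Dz: "\<forall>k<n. D k 0 = 0" and Dn: "D n 0 > 0"

context stdphi
begin

lemma D_cont: "continuous_on {0..1} (D k)"
  unfolding continuous_on_eq_continuous_within
proof
  fix x :: real assume x: "x \<in> {0..1}"
  show "continuous (at x within {0..1}) (D k)"
    by (rule DERIV_continuous[OF Dd[rule_format, OF x]])
qed

lemma phi_cont: "continuous_on {0..1} phi"
proof (rule continuous_on_eq[OF D_cont[of 0]])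
  fix x :: real assume "x \<in> {0..1}" then show "D 0 x = phi x" using D0 by blast
qed

lemma phi_deriv: assumes y: "y \<in> {0..1}" shows "(phi has_real_derivative D 1 y) (at y within {0..1})"
proof -
  have "(D 0 has_real_derivative D 1 y) (at y within {0..1})" using Dd y by simp
  then show ?thesis by (rule has_field_derivative_transform_within[OF _ zero_less_one y]) (use D0 in auto)
qed

lemma D_at: assumes s: "0 < s" "s < 1" shows "(D k has_real_derivative D (Suc k) s) (at s)"
proof -
  have s': "s \<in> {0..1}" using s by auto
  have "(D k has_real_derivative D (Suc k) s) (at s within {0<..<1})"
    by (rule has_field_derivative_subset[OF Dd[rule_format, OF s']]) auto
  moreover have e: "at s within {0<..<1} = at s" by (rule at_within_open) (use s in auto)
  ultimately show ?thesis by simp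
qed

lemma D_right: "((D k) \<longlongrightarrow> D k 0) (at_right 0)"
proof -
  have "continuous (at 0 within {0..1}) (D k)"
    using D_cont[of k] by (simp add: continuous_on_eq_continuous_within)
  then show ?thesis by (simp add: continuous_within at_within_Icc_at_right)
qed

lemma lim_j: "j \<le> n \<Longrightarrow> ((\<lambda>s. D (n-j) s / s^j) \<longlongrightarrow> D n 0 / fact j) (at_right 0)"
proof (induction j)
  case 0
  then show ?case using D_right[of n] by simp
next
  case (Suc j)
  have nj: "n - j = Suc (n - Suc j)" using Suc.prems by auto
  have IH: "((\<lambda>s. D (n-j) s / s^j) \<longlongrightarrow> D n 0 / fact j) (at_right 0)"
    using Suc by auto
  have IH2: "((\<lambda>s. D (n-j) s / (real (Suc j) * s^j)) \<longlongrightarrow> D n 0 / fact (Suc j)) (at_right 0)"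
  proof -
    have "((\<lambda>s. (D (n-j) s / s^j) / real (Suc j)) \<longlongrightarrow> (D n 0 / fact j) / real (Suc j)) (at_right 0)"
      by (intro tendsto_divide IH tendsto_const) auto
    then show ?thesis by (simp add: field_simps)
  qed
  show ?case
  proof (rule lhopital_right_0[where f'="D (n-j)" and g'="\<lambda>s. real (Suc j) * s^j"])
    show "(D (n - Suc j) \<longlongrightarrow> 0) (at_right 0)"
      using D_right[of "n - Suc j"] Dz Suc.prems by auto
    show "((\<lambda>s. s ^ Suc j) \<longlongrightarrow> 0) (at_right (0::real))"
    proof -
      have "((\<lambda>s::real. s) \<longlongrightarrow> 0) (at_right 0)" by (rule tendsto_ident_at)
      then have "((\<lambda>s. s ^ Suc j) \<longlongrightarrow> 0 ^ Suc j) (at_right (0::real))" by (rule tendsto_power)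
      then show ?thesis by simp
    qed
    show "\<forall>\<^sub>F x in at_right 0. x ^ Suc j \<noteq> (0::real)"
      unfolding eventually_at_right_field by (rule exI[of _ 1]) auto
    show "\<forall>\<^sub>F x in at_right 0. real (Suc j) * x ^ j \<noteq> 0"
      unfolding eventually_at_right_field by (rule exI[of _ 1]) auto
    show "\<forall>\<^sub>F x in at_right 0. (D (n - Suc j) has_real_derivative D (n - j) x) (at x)"
      unfolding eventually_at_right_field
      by (rule exI[of _ 1]) (auto intro!: D_at simp: nj)
    show "\<forall>\<^sub>F x in at_right 0. ((\<lambda>s. s ^ Suc j) has_real_derivative real (Suc j) * x ^ j) (at x)"
      by (intro always_eventually allI) (use DERIV_pow[of "Suc j"] in simp)
    show "LIM x at_right 0. D (n - j) x / (real (Suc j) * x ^ j) :> nhds (D n 0 / fact (Suc j))"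
      using IH2 .
  qed
qed

definition L0 where "L0 = D n 0 / fact n"
definition G where "G s = (if s = 0 then L0 else phi s / s^n)"
definition G1 where "G1 s = (if s = 0 then real n * L0 else s * D 1 s / s^n)"

lemma L0_pos: "L0 > 0" using Dn by (simp add: L0_def)

lemma G_cont: "continuous_on {0..1} G"
proof -
  have "continuous_on {0<..1} (\<lambda>s. phi s / s^n)"
    by (intro continuous_intros continuous_on_subset[OF phi_cont]) auto
  moreover have "((\<lambda>s. phi s / s^n) \<longlongrightarrow> L0) (at_right 0)"
  proof -
    have "((\<lambda>s. D (n-n) s / s^n) \<longlongrightarrow> L0) (at_right 0)"
      using lim_j[of n] by (simp add: L0_def)
    then show ?thesis
      by (rule tendsto_cong[THEN iffD1, rotated])
         (auto simp: eventually_at_right_field D0 intro!: exI[of _ 1])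
  qed
  ultimately show ?thesis unfolding G_def[abs_def] by (rule cont_piece)
qed

lemma G1_cont: "continuous_on {0..1} G1"
proof -
  have "continuous_on {0<..1} (\<lambda>s. s * D 1 s / s^n)"
    by (intro continuous_intros continuous_on_subset[OF D_cont]) auto
  moreover have "((\<lambda>s. s * D 1 s / s^n) \<longlongrightarrow> real n * L0) (at_right 0)"
  proof (cases n)
    case 0
    have "((\<lambda>s. s * D 1 s) \<longlongrightarrow> 0 * D 1 0) (at_right 0)"
      by (intro tendsto_intros D_right)
    then show ?thesis using 0 by simp
  next
    case (Suc m)
    have "((\<lambda>s. D (n-m) s / s^m) \<longlongrightarrow> D n 0 / fact m) (at_right 0)"
      using lim_j[of m] Suc by simp
    moreover have "D n 0 / fact m = real n * L0"
    proof -
      have f: "fact n = real n * (fact m :: real)" using Suc by simp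
      have "n \<noteq> 0" using Suc by simp
      have "real n * L0 = (real n * D n 0) / (real n * fact m)" using f by (simp add: L0_def)
      also have "\<dots> = D n 0 / fact m" using \<open>n \<noteq> 0\<close> by simp
      finally show ?thesis by simp
    qed
    ultimately have lim: "((\<lambda>s. D (n-m) s / s^m) \<longlongrightarrow> real n * L0) (at_right 0)" by simp
    have eq: "\<And>y. 0 < y \<Longrightarrow> D (n-m) y / y^m = y * D 1 y / y^n"
      using Suc by simp
    show ?thesis
    proof (rule tendsto_cong[THEN iffD1, OF _ lim])
      show "\<forall>\<^sub>F x in at_right 0. D (n - m) x / x ^ m = x * D 1 x / x ^ n"
        unfolding eventually_at_right_field by (rule exI[of _ 1]) (auto simp: eq)
    qed
  qed
  ultimately show ?thesis unfolding G1_def[abs_def] by (rule cont_piece)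
qed

lemma phi_G: assumes s: "s \<in> {0..1}" shows "phi s = s^n * G s"
proof (cases "s = 0")
  case True
  show ?thesis
  proof (cases "n = 0")
    case True
    have "G 0 = D n 0 / fact n" by (simp add: G_def L0_def)
    then show ?thesis using D0 \<open>s = 0\<close> True by simp
  next
    case False
    then have "phi 0 = 0" using D0 Dz by force
    then show ?thesis using False \<open>s = 0\<close> by simp
  qed
next
  case False
  then show ?thesis by (simp add: G_def)
qed

lemma D1_G1: assumes s: "s \<in> {0..1}" shows "s * D 1 s = s^n * G1 s"
proof (cases "s = 0")
  case True
  have "G1 0 = real n * L0" by (simp add: G1_def)
  then show ?thesis using True by (cases "n = 0") simp_all
next
  case False
  then show ?thesis by (simp add: G1_def)
qed

end


definition Q :: "real \<Rightarrow> real \<Rightarrow> real" where "Q a t = 2*(1-a) + a*t^2"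

lemma Q_pos: "0 \<le> a \<Longrightarrow> a < 1 \<Longrightarrow> 0 \<le> t \<Longrightarrow> t \<le> 1 \<Longrightarrow> 0 < Q a t"
  unfolding Q_def by (smt (verit) mult_nonneg_nonneg zero_le_power2)

lemma arg01: "0 \<le> (a::real) \<Longrightarrow> a \<le> 1 \<Longrightarrow> 0 \<le> (t::real) \<Longrightarrow> t \<le> 1 \<Longrightarrow> a * (1 - t^2) \<in> {0..1}"
proof -
  assume h: "0 \<le> a" "a \<le> 1" "0 \<le> t" "t \<le> 1"
  have "t^2 \<le> 1" using h by (simp add: power2_eq_square mult_le_one)
  then have "0 \<le> 1 - t^2" "1 - t^2 \<le> 1" by auto
  then show ?thesis using h by (auto simp: mult_le_one)
qed

context stdphi
begin

definition pI where "pI a t = (1-t^2)^n * G(a*(1-t^2)) / sqrt(Q a t)"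
definition sI where "sI a t = (1-t^2)^n * G(a*(1-t^2)) * t^2 * sqrt(Q a t)"
definition tI where "tI a t = (1-t^2)^n * G1(a*(1-t^2)) / sqrt(Q a t)
     - a * ((1-t^2)^n * G(a*(1-t^2))) * (t^2-2) / (2 * Q a t * sqrt(Q a t))"
definition Ptil where "Ptil a = integral {0..1} (pI a)"
definition Stil where "Stil a = integral {0..1} (sI a)"
definition Ttil where "Ttil a = integral {0..1} (tI a)"

definition pF where "pF a t = phi(a*(1-t^2)) / sqrt(Q a t)"
definition pdF where "pdF a t = (1-t^2) * D 1 (a*(1-t^2)) / sqrt(Q a t)
     - phi(a*(1-t^2)) * (t^2-2) / (2 * Q a t * sqrt(Q a t))"
definition P where "P a = integral {0..1} (pF a)"
definition Pd where "Pd a = integral {0..1} (pdF a)"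

lemma comp_cont:
  fixes h :: "real \<Rightarrow> real" and S :: "(real \<times> real) set"
  assumes h: "continuous_on {0..1} h" and S: "S \<subseteq> {0..1} \<times> {0..1}"
  shows "continuous_on S (\<lambda>p. h (fst p * (1 - (snd p)^2)))"
proof (rule continuous_on_compose2[OF h])
  show "continuous_on S (\<lambda>p. fst p * (1 - (snd p)^2))" by (intro continuous_intros)
  show "(\<lambda>p. fst p * (1 - (snd p)^2)) ` S \<subseteq> {0..1}"
  proof (rule image_subsetI)
    fix p assume "p \<in> S"
    with S have "fst p \<in> {0..1}" "snd p \<in> {0..1}" by auto
    then show "fst p * (1 - (snd p)^2) \<in> {0..1}" by (intro arg01) auto
  qed
qed

lemma Qc: "continuous_on (S::(real\<times>real) set) (\<lambda>p. Q (fst p) (snd p))"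
  unfolding Q_def by (intro continuous_intros)

lemma sqQ_nz:
  fixes S :: "(real \<times> real) set"
  assumes "S \<subseteq> {0..<1} \<times> {0..1}"
  shows "\<forall>p\<in>S. sqrt (Q (fst p) (snd p)) \<noteq> 0" "\<forall>p\<in>S. Q (fst p) (snd p) \<noteq> 0"
  using assms Q_pos by (force, force)

lemma cont_prod: 
  fixes S :: "(real \<times> real) set"
  assumes S: "S \<subseteq> {0..<1} \<times> {0..1}"
  shows "continuous_on S (\<lambda>p. pI (fst p) (snd p))"
    "continuous_on S (\<lambda>p. sI (fst p) (snd p))"
    "continuous_on S (\<lambda>p. tI (fst p) (snd p))"
    "continuous_on S (\<lambda>p. pF (fst p) (snd p))"
    "continuous_on S (\<lambda>p. pdF (fst p) (snd p))"
proof -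
  have S1: "S \<subseteq> {0..1} \<times> {0..1}" using S by auto
  note G = comp_cont[OF G_cont S1] and G1 = comp_cont[OF G1_cont S1]
    and ph = comp_cont[OF phi_cont S1] and D1 = comp_cont[OF D_cont[of 1] S1]
  note nz = sqQ_nz[OF S]
  show "continuous_on S (\<lambda>p. pI (fst p) (snd p))" unfolding pI_def
    by (intro continuous_intros G Qc; use nz in auto)
  show "continuous_on S (\<lambda>p. sI (fst p) (snd p))" unfolding sI_def
    by (intro continuous_intros G Qc; use nz in auto)
  show "continuous_on S (\<lambda>p. tI (fst p) (snd p))" unfolding tI_def
    by (intro continuous_intros G G1 Qc; use nz in auto)
  show "continuous_on S (\<lambda>p. pF (fst p) (snd p))" unfolding pF_def
    by (intro continuous_intros ph Qc; use nz in auto)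
  show "continuous_on S (\<lambda>p. pdF (fst p) (snd p))" unfolding pdF_def
    by (intro continuous_intros ph D1 Qc; use nz in auto)
qed

lemma cont_param:
  fixes f :: "real \<Rightarrow> real \<Rightarrow> real"
  assumes "continuous_on ({0..1/2} \<times> {0..1}) (\<lambda>p. f (fst p) (snd p))"
  shows "continuous_on {0..1/2::real} (\<lambda>x. integral {0..1::real} (f x))"
proof -
  have "continuous_on ({0..1/2} \<times> cbox 0 1) (\<lambda>(x, t). f x t)"
  proof -
    have e: "cbox 0 1 = {0..1::real}" by simp
    show ?thesis unfolding e case_prod_beta' using assms .
  qed
  from integral_continuous_on_param[OF this] show ?thesis by simp
qed

lemma Ptil_cont: "continuous_on {0..1/2} Ptil"
  unfolding Ptil_def by (rule cont_param) (rule cont_prod, auto)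
lemma Stil_cont: "continuous_on {0..1/2} Stil"
  unfolding Stil_def by (rule cont_param) (rule cont_prod, auto)
lemma Ttil_cont: "continuous_on {0..1/2} Ttil"
  unfolding Ttil_def by (rule cont_param) (rule cont_prod, auto)

end


lemma slice:
  fixes f :: "real \<Rightarrow> real \<Rightarrow> real"
  assumes "continuous_on ({x} \<times> {0..1}) (\<lambda>p. f (fst p) (snd p))"
  shows "continuous_on {0..1} (f x)"
proof -
  have "continuous_on {0..1} (\<lambda>t. (\<lambda>p. f (fst p) (snd p)) (x, t))"
    by (rule continuous_on_compose2[OF assms]) (auto intro!: continuous_intros)
  then show ?thesis by simp
qed

lemma alg_Pd:
  fixes a X Y an K1 K2 c q r :: real
  assumes h1: "a * X = an * K1" and h2: "Y = an * K2"
  shows "a * (X / r - Y * c / (2 * q * r)) = an * (K1 / r - a * K2 * c / (2 * q * r))"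
proof -
  have "a * (X / r - Y * c / (2 * q * r)) = (a * X) / r - a * Y * c / (2 * q * r)"
    by (simp add: right_diff_distrib)
  also have "\<dots> = (an * K1) / r - a * (an * K2) * c / (2 * q * r)" unfolding h1 h2 ..
  also have "\<dots> = an * (K1 / r - a * K2 * c / (2 * q * r))" by (simp add: right_diff_distrib mult_ac)
  finally show ?thesis .
qed

lemma quot_alg:
  fixes A B c r :: real
  assumes "0 < r"
  shows "(A * r - B * (c / (2 * r))) / (r * r) = A / r - B * c / (2 * (r * r) * r)"
  using assms by (simp add: field_simps)

lemma FTC_M:
  fixes n :: nat
  shows "((\<lambda>t::real. (1-t^2)^n - (2*real n+3) * ((1-t^2)^n * t^2)) has_integral 0) {0..1}"
proof -
  have d: "((\<lambda>t::real. t * (1-t^2)^(Suc n)) has_real_derivative (1-t^2)^n - (2*real n+3) * ((1-t^2)^n * t^2)) (at t within {0..1})" for t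
  proof -
    have "((\<lambda>t::real. t * (1-t^2)^(Suc n)) has_real_derivative 
        1 * (1-t^2)^(Suc n) + t * (real (Suc n) * (1-t^2)^n * (0 - 2*t))) (at t within {0..1})"
      by (intro derivative_eq_intros) (auto simp: power2_eq_square)
    moreover have "1 * (1-t^2)^(Suc n) + t * (real (Suc n) * (1-t^2)^n * (0 - 2*t))
        = (1-t^2)^n - (2*real n+3) * ((1-t^2)^n * t^2)"
      by (simp add: algebra_simps power2_eq_square)
    ultimately show ?thesis by simp
  qed
  have "((\<lambda>t::real. (1-t^2)^n - (2*real n+3) * ((1-t^2)^n * t^2)) has_integral
      ((\<lambda>t::real. t * (1-t^2)^(Suc n)) 1 - (\<lambda>t::real. t * (1-t^2)^(Suc n)) 0)) {0..1}"
  proof (rule fundamental_theorem_of_calculus)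
    fix t :: real assume "t \<in> {0..1}"
    show "((\<lambda>t::real. t * (1-t^2)^(Suc n)) has_vector_derivative (1-t^2)^n - (2*real n+3) * ((1-t^2)^n * t^2)) (at t within {0..1})"
      using d[of t] by (simp only: has_real_derivative_iff_has_vector_derivative)
  qed simp
  then show ?thesis by simp
qed

context stdphi
begin

definition Mn where "Mn = integral {0..1} (\<lambda>t::real. (1-t^2)^n)"
definition Nn where "Nn = integral {0..1} (\<lambda>t::real. (1-t^2)^n * t^2)"

lemma MN: "Mn = (2*real n+3) * Nn"
proof -
  have i1: "(\<lambda>t::real. (1-t^2)^n) integrable_on {0..1}"
    by (intro integrable_continuous_interval continuous_intros)
  have i2: "(\<lambda>t::real. (2*real n+3) * ((1-t^2)^n * t^2)) integrable_on {0..1}"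
    by (intro integrable_continuous_interval continuous_intros)
  have "0 = integral {0..1} (\<lambda>t::real. (1-t^2)^n - (2*real n+3) * ((1-t^2)^n * t^2))"
    using FTC_M[of n] by (simp add: integral_unique)
  also have "\<dots> = Mn - (2*real n+3) * Nn"
    unfolding Mn_def Nn_def by (simp add: integral_diff[OF i1 i2])
  finally show ?thesis by simp
qed

lemma Mn_pos: "0 < Mn"
proof -
  define F where "F = (\<lambda>t::real. uminus ((1-t)^(Suc n)) / real (Suc n))"
  have "((\<lambda>t::real. (1-t)^n) has_integral (F 1 - F 0)) {0..1}"
  proof (rule fundamental_theorem_of_calculus)
    fix t :: real
    have "(F has_real_derivative (1-t)^n) (at t within {0..1})"
      unfolding F_def by (rule derivative_eq_intros refl | simp)+
    then show "(F has_vector_derivative (1-t)^n) (at t within {0..1})"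
      by (simp add: has_real_derivative_iff_has_vector_derivative)
  qed simp
  then have i: "integral {0..1} (\<lambda>t::real. (1-t)^n) = 1 / real (Suc n)" by (simp add: integral_unique F_def)
  have "integral {0..1} (\<lambda>t::real. (1-t)^n) \<le> Mn"
    unfolding Mn_def
  proof (rule integral_le)
    show "(\<lambda>t::real. (1-t)^n) integrable_on {0..1}"
      by (intro integrable_continuous_interval continuous_intros)
    show "(\<lambda>t::real. (1-t^2)^n) integrable_on {0..1}"
      by (intro integrable_continuous_interval continuous_intros)
    fix t :: real assume t: "t \<in> {0..1}"
    then have "t * t \<le> t * 1" by (intro mult_left_mono) auto
    then have "1 - t \<le> 1 - t^2" "0 \<le> 1 - t" using t by (auto simp: power2_eq_square)
    then show "(1-t)^n \<le> (1-t^2)^n" by (intro power_mono) auto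
  qed
  then show ?thesis using i by (smt (verit) divide_pos_pos of_nat_0_less_iff zero_less_Suc)
qed

lemma P_deriv:
  assumes x: "0 < x" "x < 1"
  shows "(P has_real_derivative Pd x) (at x)"
proof -
  let ?U = "{0<..<1::real}"
  have fx: "((\<lambda>x. pF x t) has_field_derivative pdF x t) (at x within ?U)"
    if xU: "x \<in> ?U" and t: "t \<in> cbox 0 1" for x t
  proof -
    have t': "0 \<le> t" "t \<le> 1" using t by auto
    have gx: "x * (1 - t^2) \<in> {0..1}" using xU t' by (intro arg01) auto
    have gU: "(\<lambda>x. x * (1 - t^2)) ` ?U \<subseteq> {0..1}"
      using t' by (auto intro!: arg01)
    have d0: "(phi has_real_derivative D 1 (x * (1 - t^2))) (at (x * (1 - t^2)) within (\<lambda>x. x * (1 - t^2)) ` ?U)"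
      by (rule has_field_derivative_subset[OF phi_deriv[OF gx] gU])
    have dg: "((\<lambda>x. x * (1 - t^2)) has_real_derivative (1 - t^2)) (at x within ?U)"
      by (rule derivative_eq_intros refl | simp)+
    have d1: "((\<lambda>x. phi (x * (1 - t^2))) has_real_derivative D 1 (x * (1 - t^2)) * (1 - t^2)) (at x within ?U)"
      using DERIV_image_chain[OF d0 dg] by (simp add: o_def)
    have Qp: "0 < Q x t" using xU t' by (intro Q_pos) auto
    have dQ: "((\<lambda>x. Q x t) has_real_derivative (t^2 - 2)) (at x within ?U)"
      unfolding Q_def by (rule derivative_eq_intros refl | simp add: algebra_simps)+
    have d2: "((\<lambda>x. sqrt (Q x t)) has_real_derivative (t^2 - 2) / (2 * sqrt (Q x t))) (at x within ?U)"
    proof -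
      have "((\<lambda>x. sqrt (Q x t)) has_real_derivative inverse (sqrt (Q x t)) / 2 * (t^2 - 2)) (at x within ?U)"
        using DERIV_chain2[OF DERIV_real_sqrt[OF Qp] dQ] .
      then show ?thesis by (simp add: field_simps)
    qed
    have sp: "0 < sqrt (Q x t)" using Qp by simp
    have "((\<lambda>x. phi (x * (1 - t^2)) / sqrt (Q x t)) has_real_derivative
        (D 1 (x * (1 - t^2)) * (1 - t^2) * sqrt (Q x t) - phi (x * (1 - t^2)) * ((t^2 - 2) / (2 * sqrt (Q x t)))) / (sqrt (Q x t) * sqrt (Q x t))) (at x within ?U)"
      by (rule DERIV_divide[OF d1 d2]) (use sp in simp)
    moreover have "sqrt (Q x t) * sqrt (Q x t) = Q x t" using Qp by simp
    ultimately show ?thesis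
      unfolding pF_def pdF_def using quot_alg[OF sp, of "D 1 (x * (1 - t^2)) * (1 - t^2)" "phi (x * (1 - t^2))" "t^2 - 2"]
      by (simp add: mult.commute mult.left_commute)
  qed
  have int: "pF x integrable_on cbox 0 1" if "x \<in> ?U" for x
  proof -
    have "continuous_on {0..1} (pF x)"
      by (rule slice, rule cont_prod) (use that in auto)
    then show ?thesis by (simp add: integrable_continuous_interval)
  qed
  have cfx: "continuous_on (?U \<times> cbox 0 1) (\<lambda>(x, t). pdF x t)"
  proof -
    have "continuous_on (?U \<times> {0..1}) (\<lambda>p. pdF (fst p) (snd p))"
      by (rule cont_prod) auto
    then show ?thesis by (simp add: case_prod_beta')
  qed
  have "((\<lambda>x. integral (cbox 0 1) (pF x)) has_field_derivative integral (cbox 0 1) (pdF x)) (at x within ?U)"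
    by (rule leibniz_rule_field_derivative[OF fx int cfx]) (use x in auto)
  moreover have e: "at x within ?U = at x" by (rule at_within_open) (use x in auto)
  ultimately show ?thesis unfolding P_def[abs_def] Pd_def by simp
qed

lemma P_rel: assumes "0 \<le> a" "a \<le> 1" shows "P a = a^n * Ptil a"
proof -
  have "P a = integral {0..1} (\<lambda>t. a^n * pI a t)"
    unfolding P_def
  proof (rule integral_cong)
    fix t :: real assume t: "t \<in> {0..1}"
    have s: "a * (1 - t^2) \<in> {0..1}" using assms t by (intro arg01) auto
    show "pF a t = a^n * pI a t"
      unfolding pF_def pI_def phi_G[OF s] by (simp add: power_mult_distrib)
  qed
  then show ?thesis unfolding Ptil_def by simp
qed

lemma Pd_rel: assumes "0 \<le> a" "a \<le> 1" shows "a * Pd a = a^n * Ttil a"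
proof -
  have "a * Pd a = integral {0..1} (\<lambda>t. a * pdF a t)" unfolding Pd_def by simp
  also have "\<dots> = integral {0..1} (\<lambda>t. a^n * tI a t)"
  proof (rule integral_cong)
    fix t :: real assume t: "t \<in> {0..1}"
    have s: "a * (1 - t^2) \<in> {0..1}" using assms t by (intro arg01) auto
    have e1: "a * ((1-t^2) * D 1 (a*(1-t^2))) = a^n * ((1-t^2)^n * G1 (a*(1-t^2)))"
      using D1_G1[OF s] by (simp add: power_mult_distrib mult.assoc)
    have e2: "phi (a*(1-t^2)) = a^n * ((1-t^2)^n * G (a*(1-t^2)))"
      using phi_G[OF s] by (simp add: power_mult_distrib mult.assoc)
    show "a * pdF a t = a^n * tI a t"
      unfolding pdF_def tI_def by (rule alg_Pd[OF e1 e2])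
  qed
  also have "\<dots> = a^n * Ttil a" unfolding Ttil_def by simp
  finally show ?thesis .
qed

lemma Ptil0: "Ptil 0 = L0 * Mn / sqrt 2"
proof -
  have "Ptil 0 = integral {0..1} (\<lambda>t. (L0 / sqrt 2) * (1-t^2)^n)"
    unfolding Ptil_def by (rule integral_cong) (simp add: pI_def Q_def G_def)
  then show ?thesis unfolding Mn_def by simp
qed

lemma Stil0: "Stil 0 = L0 * sqrt 2 * Nn"
proof -
  have "Stil 0 = integral {0..1} (\<lambda>t. (L0 * sqrt 2) * ((1-t^2)^n * t^2))"
    unfolding Stil_def by (rule integral_cong) (simp add: sI_def Q_def G_def)
  then show ?thesis unfolding Nn_def by simp
qed

lemma Ttil0: "Ttil 0 = real n * L0 * Mn / sqrt 2"
proof -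
  have "Ttil 0 = integral {0..1} (\<lambda>t. (real n * L0 / sqrt 2) * (1-t^2)^n)"
    unfolding Ttil_def by (rule integral_cong) (simp add: tI_def Q_def G1_def)
  then show ?thesis unfolding Mn_def by simp
qed

end


lemma subst01:
  fixes f h :: "real \<Rightarrow> real" and W E0 :: real
  assumes W: "0 < W" "W < E0" and h: "continuous_on {0..1} h"
    and eq: "\<And>t. 0 < t \<Longrightarrow> t \<le> 1 \<Longrightarrow> h t = 2*(E0-W)*t * f (W + (E0-W)*t^2)"
  shows "integral {W..E0} f = integral {0..1} h"
proof -
  define g where "g = (\<lambda>t::real. W + (E0-W)*t^2)"
  define g' where "g' = (\<lambda>t::real. 2*(E0-W)*t)"
  have der: "(g has_field_derivative g' t) (at t within {0..1})" for t
    unfolding g_def g'_def by (rule derivative_eq_intros refl | simp)+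
  have inj: "inj_on g {0..1}"
  proof (rule inj_onI)
    fix x y :: real assume x: "x \<in> {0..1}" and y: "y \<in> {0..1}" and e: "g x = g y"
    then have "x^2 = y^2" using W by (simp add: g_def)
    then show "x = y" using x y by (simp add: power2_eq_iff_nonneg)
  qed
  have img: "g ` {0..1} = {W..E0}"
  proof
    show "g ` {0..1} \<subseteq> {W..E0}"
    proof (rule image_subsetI)
      fix t :: real assume t: "t \<in> {0..1}"
      then have "t^2 \<le> 1" by (simp add: power_le_one)
      then have b: "(E0-W)*t^2 \<le> (E0-W)*1" using W by (intro mult_left_mono) auto
      have a: "0 \<le> (E0-W)*t^2" using W by simp
      have c: "W + (E0-W)*t^2 \<le> W + (E0-W)*1" using b by (rule add_left_mono)
      have "W \<le> W + (E0-W)*t^2" "W + (E0-W)*t^2 \<le> E0" using a c by simp_all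
      then show "g t \<in> {W..E0}" by (simp add: g_def)
    qed
    show "{W..E0} \<subseteq> g ` {0..1}"
    proof
      fix E assume E: "E \<in> {W..E0}"
      define t where "t = sqrt ((E-W)/(E0-W))"
      have q: "0 \<le> (E-W)/(E0-W)" "(E-W)/(E0-W) \<le> 1" using E W by auto
      have "t \<in> {0..1}" using q by (auto simp: t_def)
      moreover have "g t = E" using q W by (simp add: g_def t_def)
      ultimately show "E \<in> g ` {0..1}" by (metis image_eqI)
    qed
  qed
  have spike: "\<And>x. x \<in> {0..1} - {0} \<Longrightarrow> \<bar>g' x\<bar> * f (g x) = h x"
    using eq W by (auto simp: g_def g'_def)
  have ng: "negligible {0::real}" by simp
  have ai: "(\<lambda>x. \<bar>g' x\<bar> * f (g x)) absolutely_integrable_on {0..1}"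
    by (rule absolutely_integrable_spike[OF absolutely_integrable_continuous_real[OF h] ng spike])
  have ii: "integral {0..1} (\<lambda>x. \<bar>g' x\<bar> * f (g x)) = integral {0..1} h"
    by (rule integral_spike[OF ng, symmetric]) (use spike in auto)
  have "f absolutely_integrable_on (g ` {0..1}) \<and> integral (g ` {0..1}) f = integral {0..1} h"
    using has_absolute_integral_change_of_variables_1'[of "{0..1}" g g' f "integral {0..1} h"] der inj ai ii
    by auto
  then show ?thesis using img by simp
qed



lemma powr_mhalf: "0 < (z::real) \<Longrightarrow> (z^2) powr (-1/2) = 1 / z"
proof -
  assume z: "0 < z"
  have "(z^2) powr (-1/2) = inverse ((z^2) powr (1/2))"
    using powr_minus[of "z^2" "1/2"] by simp
  also have "\<dots> = inverse (sqrt (z^2))" by (simp add: powr_half_sqrt)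
  also have "\<dots> = 1 / z" using z by (simp add: divide_inverse)
  finally show ?thesis .
qed

lemma powr_phalf: "0 < (z::real) \<Longrightarrow> (z^2) powr (1/2) = z"
  by (simp add: powr_half_sqrt)

lemma yid:
  fixes E0 V a t :: real
  assumes E0: "0 < E0" and a: "a = 1 - V/E0" and V: "0 < V" and a0: "0 < a" "a < 1"
    and t: "0 \<le> t" "t \<le> 1"
  shows "(V + (E0-V)*t^2)^2/V^2 - 1 = (E0*t* sqrt a* sqrt (Q a t)/V)^2"
    and "1 - (V + (E0-V)*t^2)/E0 = a*(1-t^2)"
    and "E0 - V = E0 * a"
proof -
  have Vr: "V = E0*(1-a)" using a E0 by (simp add: field_simps)
  show "1 - (V + (E0-V)*t^2)/E0 = a*(1-t^2)" unfolding Vr using E0 by (simp add: field_simps)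
  show "E0 - V = E0 * a" unfolding Vr by (simp add: algebra_simps)
  have Qp: "0 < Q a t" using a0 t by (intro Q_pos) auto
  have "(E0*t* sqrt a* sqrt (Q a t)/V)^2 = E0^2*t^2*a*Q a t/V^2"
    using Qp a0 by (simp add: power_mult_distrib power_divide)
  also have "\<dots> = (V + (E0-V)*t^2)^2/V^2 - 1"
  proof -
    have d: "(E0*(1-a))^2 \<noteq> 0" using E0 a0 by simp
    have num: "(E0*(1-a) + E0*a*t^2)^2 - (E0*(1-a))^2 = E0^2*t^2*a*(2*(1-a) + a*t^2)"
      by (simp add: algebra_simps power2_eq_square)
    have "(E0*(1-a) + E0*a*t^2)^2/(E0*(1-a))^2 - 1 = ((E0*(1-a) + E0*a*t^2)^2 - (E0*(1-a))^2)/(E0*(1-a))^2"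
      using d by (simp add: diff_divide_distrib)
    also have "\<dots> = E0^2*t^2*a*(2*(1-a) + a*t^2)/(E0*(1-a))^2" unfolding num ..
    finally have "E0^2*t^2*a*(2*(1-a) + a*t^2)/(E0*(1-a))^2 = (E0*(1-a) + E0*a*t^2)^2/(E0*(1-a))^2 - 1" by simp
    moreover have "E0 - V = E0*a" unfolding Vr by (simp add: algebra_simps)
    ultimately show ?thesis unfolding Q_def Vr[symmetric] by simp
  qed
  finally show "(V + (E0-V)*t^2)^2/V^2 - 1 = (E0*t* sqrt a* sqrt (Q a t)/V)^2" by simp
qed

lemma alg_c:
  fixes E0 b a w :: real
  assumes "E0 \<noteq> 0" "b \<noteq> 0"
  shows "4 * pi / (E0*b) * (2*E0*a*E0*w/(E0*b)) = 8*pi*a*w/b^2"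
  using assms by (simp add: field_simps power2_eq_square)

context stdphi
begin

lemma I_m:
  fixes E0 V a :: real
  assumes E0: "0 < E0" and V: "0 < V" "V < E0" and a: "a = 1 - V/E0"
  shows "integral {V..E0} (\<lambda>E. Phi E0 phi E * (E\<^sup>2 / V\<^sup>2 - 1) powr (-1/2)) = 2*V* sqrt a * P a"
proof -
  have aa: "a = (E0-V)/E0" using a E0 by (simp add: field_simps)
  have a0: "0 < a" "a < 1" unfolding aa using V E0 by (auto simp: divide_less_eq)
  have cont: "continuous_on {0..1} (\<lambda>t. 2*V* sqrt a * pF a t)"
  proof -
    have "continuous_on {0..1} (pF a)" by (rule slice, rule cont_prod) (use a0 in auto)
    then show ?thesis by (intro continuous_intros)
  qed
  have "integral {V..E0} (\<lambda>E. Phi E0 phi E * (E\<^sup>2 / V\<^sup>2 - 1) powr (-1/2)) = integral {0..1} (\<lambda>t. 2*V* sqrt a * pF a t)"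
  proof (rule subst01[OF V cont])
    fix t :: real assume t: "0 < t" "t \<le> 1"
    have t0: "0 \<le> t" "t \<le> 1" using t by auto
    note y = yid[OF E0 a V(1) a0 t0]
    have Qp: "0 < Q a t" using a0 t by (intro Q_pos) auto
    have zp: "0 < E0*t* sqrt a* sqrt (Q a t)/V" using E0 t a0 Qp V by simp
    have "2*(E0-V)*t * (Phi E0 phi (V + (E0-V)*t^2) * ((V + (E0-V)*t^2)^2/V^2 - 1) powr (-1/2))
        = 2*(E0*a)*t * (phi (a*(1-t^2)) * (1 / (E0*t* sqrt a* sqrt (Q a t)/V)))"
      unfolding Phi_def y(1) y(2) unfolding powr_mhalf[OF zp] y(3) ..
    also have "\<dots> = 2*V* sqrt a * pF a t"
    proof -
      have sa: "sqrt a * sqrt a = a" using a0 by simp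
      have "2*(E0*a)*t * (phi (a*(1-t^2)) * (1 / (E0*t* sqrt a* sqrt (Q a t)/V)))
          = 2*(E0*(sqrt a * sqrt a))*t * (phi (a*(1-t^2)) * (1 / (E0*t* sqrt a* sqrt (Q a t)/V)))"
        by (simp only: sa)
      also have "\<dots> = 2*V* sqrt a * pF a t"
        unfolding pF_def using E0 t a0 Qp V by (simp add: field_simps)
      finally show ?thesis .
    qed
    finally show "2*V* sqrt a * pF a t = 2*(E0-V)*t * (Phi E0 phi (V + (E0-V)*t^2) * ((V + (E0-V)*t^2)^2/V^2 - 1) powr (-1/2))"
      by simp
  qed
  also have "\<dots> = 2*V* sqrt a * P a" unfolding P_def by simp
  finally show ?thesis .
qed

lemma xi_m:
  fixes E0 V a :: real
  assumes E0: "0 < E0" and V: "0 < V" "V < E0" and a: "a = 1 - V/E0"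
  shows "xi (-1/2) E0 phi V = 8*pi* sqrt a * P a"
  unfolding xi_def I_m[OF assms] using V by simp

lemma xi_p:
  fixes E0 V a :: real
  assumes E0: "0 < E0" and V: "0 < V" "V < E0" and a: "a = 1 - V/E0"
  shows "xi (1/2) E0 phi V = 8*pi*a* sqrt a/(1-a)^2 * (a^n * Stil a)"
proof -
  have aa: "a = (E0-V)/E0" using a E0 by (simp add: field_simps)
  have a0: "0 < a" "a < 1" unfolding aa using V E0 by (auto simp: divide_less_eq)
  have Vr: "V = E0*(1-a)" using a E0 by (simp add: field_simps)
  define c where "c = 2*E0*a*E0* sqrt a/V"
  have cont: "continuous_on {0..1} (\<lambda>t. c * (a^n * sI a t))"
  proof -
    have "continuous_on {0..1} (sI a)" by (rule slice, rule cont_prod) (use a0 in auto)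
    then show ?thesis by (intro continuous_intros)
  qed
  have "integral {V..E0} (\<lambda>E. Phi E0 phi E * (E\<^sup>2 / V\<^sup>2 - 1) powr (1/2)) = integral {0..1} (\<lambda>t. c * (a^n * sI a t))"
  proof (rule subst01[OF V cont])
    fix t :: real assume t: "0 < t" "t \<le> 1"
    have t0: "0 \<le> t" "t \<le> 1" using t by auto
    note y = yid[OF E0 a V(1) a0 t0]
    have Qp: "0 < Q a t" using a0 t by (intro Q_pos) auto
    have zp: "0 < E0*t* sqrt a* sqrt (Q a t)/V" using E0 t a0 Qp V by simp
    have s: "a * (1 - t^2) \<in> {0..1}" using a0 t by (intro arg01) auto
    have "2*(E0-V)*t * (Phi E0 phi (V + (E0-V)*t^2) * ((V + (E0-V)*t^2)^2/V^2 - 1) powr (1/2))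
        = 2*(E0*a)*t * (phi (a*(1-t^2)) * (E0*t* sqrt a* sqrt (Q a t)/V))"
      unfolding Phi_def y(1) y(2) unfolding powr_phalf[OF zp] y(3) ..
    also have "\<dots> = c * (a^n * sI a t)"
    proof -
      have pm: "(a*(1-t^2))^n = a^n*(1-t^2)^n" by (simp add: power_mult_distrib)
      show ?thesis unfolding sI_def c_def phi_G[OF s] pm using V by (simp add: field_simps power2_eq_square)
    qed
    finally show "c * (a^n * sI a t) = 2*(E0-V)*t * (Phi E0 phi (V + (E0-V)*t^2) * ((V + (E0-V)*t^2)^2/V^2 - 1) powr (1/2))"
      by simp
  qed
  also have "\<dots> = c * (a^n * Stil a)" unfolding Stil_def by simp
  finally have I: "integral {V..E0} (\<lambda>E. Phi E0 phi E * (E\<^sup>2 / V\<^sup>2 - 1) powr (1/2)) = c * (a^n * Stil a)" .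
  have "4 * pi / V * c = 8*pi*a* sqrt a/(1-a)^2"
    unfolding c_def Vr using alg_c[of E0 "1-a" a "sqrt a"] E0 a0 by simp
  then have "4 * pi / V * (c * (a^n * Stil a)) = 8*pi*a* sqrt a/(1-a)^2 * (a^n * Stil a)"
    by (metis mult.assoc)
  then show ?thesis unfolding xi_def I .
qed

end


lemma alg_R:
  fixes r a b p an S T :: real
  assumes r: "0 < r" and a: "a = r*r" and b: "b \<noteq> 0" and p: "p \<noteq> 0" and an: "an \<noteq> 0"
  shows "(8*pi*a*r/b^2 * (an*S)) / (8*pi*r*(an*p)) * ((4*pi*an/r * ((1-3*a)*p + 2*b*T)) / (8*pi*r*(an*p)))
         = S * ((1-3*a)*p + 2*b*T) / (2*b^2*p^2)"
  using r b p an unfolding a by (simp add: field_simps power2_eq_square)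

context stdphi
begin

lemma zeta_f:
  fixes E0 V a :: real
  assumes E0: "0 < E0" and V: "0 < V" "V < E0" and a: "a = 1 - V/E0"
  shows "zeta E0 phi V = 4*pi*((1-a)/sqrt a * P a + 2*(1-a)/sqrt a * (a * Pd a) - 2* sqrt a * P a)"
proof -
  have aa: "a = (E0-V)/E0" using a E0 by (simp add: field_simps)
  have a0: "0 < a" "a < 1" unfolding aa using V E0 by (auto simp: divide_less_eq)
  define F where "F = (\<lambda>W. integral {W..E0} (\<lambda>E. Phi E0 phi E * (E\<^sup>2 / W\<^sup>2 - 1) powr (-1/2)))"
  define H where "H = (\<lambda>W. 2*W* sqrt (1 - W/E0) * P (1 - W/E0))"
  have FH: "\<forall>\<^sub>F W in nhds V. F W = H W"
    unfolding eventually_nhds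
  proof (intro exI conjI ballI)
    show "open {0<..<E0}" by simp
    show "V \<in> {0<..<E0}" using V by simp
    fix W assume "W \<in> {0<..<E0}"
    then show "F W = H W" unfolding F_def H_def using I_m[OF E0, of W "1 - W/E0"] by simp
  qed
  have dA: "((\<lambda>W. 1 - W/E0) has_real_derivative -1/E0) (at V)"
    using DERIV_diff[OF DERIV_const[of 1] DERIV_cdivide[OF DERIV_ident, of E0]] by simp
  have dP: "((\<lambda>W. P (1 - W/E0)) has_real_derivative Pd a * (-1/E0)) (at V)"
  proof -
    have Pd': "(P has_real_derivative Pd (1 - V/E0)) (at (1 - V/E0))" using P_deriv[OF a0] a by simp
    show ?thesis using DERIV_chain2[OF Pd' dA] a by simp
  qed
  have dS: "((\<lambda>W. sqrt (1 - W/E0)) has_real_derivative inverse (sqrt a) / 2 * (-1/E0)) (at V)"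
  proof -
    have Sd': "(sqrt has_real_derivative inverse (sqrt (1 - V/E0)) / 2) (at (1 - V/E0))" using DERIV_real_sqrt[OF a0(1)] a by simp
    show ?thesis using DERIV_chain2[OF Sd' dA] a by simp
  qed
  have d2: "((\<lambda>W. 2*W) has_real_derivative 2) (at V)"
    by (rule derivative_eq_intros refl | simp)+
  have dH: "(H has_real_derivative (2 * sqrt a + inverse (sqrt a) / 2 * (-1/E0) * (2*V)) * P a + Pd a * (-1/E0) * (2*V* sqrt a)) (at V)"
    unfolding H_def using DERIV_mult[OF DERIV_mult[OF d2 dS] dP] unfolding a by simp
  have "deriv F V = deriv H V" by (rule deriv_cong_ev[OF FH refl])
  also have "\<dots> = (2 * sqrt a + inverse (sqrt a) / 2 * (-1/E0) * (2*V)) * P a + Pd a * (-1/E0) * (2*V* sqrt a)"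
    by (rule DERIV_imp_deriv[OF dH])
  finally have dF: "deriv F V = (2 * sqrt a + inverse (sqrt a) / 2 * (-1/E0) * (2*V)) * P a + Pd a * (-1/E0) * (2*V* sqrt a)" .
  have VE: "V/E0 = 1 - a" using a by simp
  have sa: "sqrt a * sqrt a = a" "0 < sqrt a" using a0 by auto
  have "zeta E0 phi V = -4*pi*((2 * sqrt a + inverse (sqrt a) / 2 * (-1/E0) * (2*V)) * P a + Pd a * (-1/E0) * (2*V* sqrt a))"
    unfolding zeta_def dF[unfolded F_def] by simp
  also have "\<dots> = -4*pi*((2 * sqrt a - inverse (sqrt a) * (V/E0)) * P a - 2 * (V/E0) * sqrt a * Pd a)"
    by (simp add: algebra_simps)
  also have "\<dots> = 4*pi*((1-a)/sqrt a * P a + 2*(1-a)/sqrt a * (a * Pd a) - 2* sqrt a * P a)"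
  proof -
    have sa2: "\<And>X. sqrt a * (sqrt a * X) = a * X" using sa(1) by (metis mult.assoc)
    show ?thesis unfolding VE using sa by (simp add: field_simps sa2)
  qed
  finally show ?thesis .
qed

definition Rf where "Rf a = Stil a * ((1-3*a) * Ptil a + 2*(1-a) * Ttil a) / (2*(1-a)^2 * Ptil a^2)"

lemma ratio_eq:
  fixes E0 V a :: real
  assumes E0: "0 < E0" and V: "0 < V" "V < E0" and a: "a = 1 - V/E0" and p: "Ptil a \<noteq> 0"
  shows "xi (1/2) E0 phi V / xi (-1/2) E0 phi V * (zeta E0 phi V / xi (-1/2) E0 phi V) = Rf a"
proof -
  have aa: "a = (E0-V)/E0" using a E0 by (simp add: field_simps)
  have a0: "0 < a" "a < 1" unfolding aa using V E0 by (auto simp: divide_less_eq)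
  have Pa: "P a = a^n * Ptil a" by (rule P_rel) (use a0 in auto)
  have Pda: "a * Pd a = a^n * Ttil a" by (rule Pd_rel) (use a0 in auto)
  have z: "zeta E0 phi V = 4*pi*a^n/sqrt a * ((1-3*a)*Ptil a + 2*(1-a)*Ttil a)"
  proof -
    have sa: "sqrt a * sqrt a = a" "0 < sqrt a" using a0 by auto
    have sa2: "\<And>X. sqrt a * (sqrt a * X) = a * X" using sa(1) by (metis mult.assoc)
    show ?thesis unfolding zeta_f[OF assms(1-4)] Pa Pda using sa
      by (simp add: field_simps sa2)
  qed
  have x1: "xi (-1/2) E0 phi V = 8*pi* sqrt a*(a^n*Ptil a)" unfolding xi_m[OF assms(1-4)] Pa ..
  have x2: "xi (1/2) E0 phi V = 8*pi*a* sqrt a/(1-a)^2 * (a^n * Stil a)" by (rule xi_p[OF assms(1-4)])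
  have "sqrt a * sqrt a = a" using a0 by simp
  then show ?thesis unfolding x1 x2 z Rf_def
    using alg_R[of "sqrt a" a "1-a" "Ptil a" "a^n" "Stil a" "Ttil a"] a0 p by simp
qed

end


lemma alg_num:
  fixes L0 Mn s c m :: real
  assumes "s \<noteq> 0" "s * s = 2" "c \<noteq> 0"
  shows "L0 * s * (Mn / c) * ((1-3*0)*(L0 * Mn / s) + 2*(1-0)*(m * L0 * Mn / s)) = (L0*Mn)^2*(2*m+1)/c"
proof -
  have "L0 * s * (Mn / c) * ((1-3*0)*(L0 * Mn / s) + 2*(1-0)*(m * L0 * Mn / s))
     = (s / s) * (L0 * Mn)^2 * (1 + 2*m) / c"
    by (simp add: field_simps power2_eq_square)
  then show ?thesis using assms by simp
qed

context stdphi
begin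

lemma cont_at0: "continuous_on {0..1/2} f \<Longrightarrow> (f \<longlongrightarrow> f 0) (at_right (0::real))"
proof -
  assume c: "continuous_on {0..1/2} f"
  then have "continuous (at 0 within {0..1/2}) f" by (simp add: continuous_on_eq_continuous_within)
  then show ?thesis by (simp add: continuous_within at_within_Icc_at_right)
qed

lemma Ptil0_pos: "0 < Ptil 0"
  unfolding Ptil0 using L0_pos Mn_pos by simp

lemma Rf_lim: "(Rf \<longlongrightarrow> (2*real n+1)/(2*real n+3)) (at_right 0)"
proof -
  have ne: "2*(1-0)^2*Ptil 0^2 \<noteq> 0" using Ptil0_pos by simp
  have "(Rf \<longlongrightarrow> Stil 0 * ((1-3*0)*Ptil 0 + 2*(1-0)*Ttil 0)/(2*(1-0)^2*Ptil 0^2)) (at_right 0)"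
    unfolding Rf_def[abs_def]
    by (intro tendsto_intros cont_at0 Ptil_cont Stil_cont Ttil_cont ne)
  moreover have "Stil 0 * ((1-3*0)*Ptil 0 + 2*(1-0)*Ttil 0)/(2*(1-0)^2*Ptil 0^2) = (2*real n+1)/(2*real n+3)"
  proof -
    have s2: "sqrt 2 * sqrt 2 = (2::real)" by simp
    have nz: "L0 \<noteq> 0" "Mn \<noteq> 0" "sqrt 2 \<noteq> 0" "2*real n+3 \<noteq> 0" using L0_pos Mn_pos by auto
    have Nn: "Nn = Mn/(2*real n+3)" using MN nz by (simp add: field_simps)
    have num: "Stil 0 * ((1-3*0)*Ptil 0 + 2*(1-0)*Ttil 0) = (L0*Mn)^2*(2*real n+1)/(2*real n+3)"
      unfolding Ptil0 Stil0 Ttil0 Nn by (rule alg_num) (use nz s2 in auto)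
    have den: "2*(1-0)^2*Ptil 0^2 = (L0*Mn)^2"
      unfolding Ptil0 by (simp add: power_divide power_mult_distrib)
    have "(L0*Mn)^2 \<noteq> 0" using nz by simp
    then show ?thesis unfolding num den by simp
  qed
  ultimately show ?thesis by simp
qed

end

theorem mainTheorem8:
  fixes phi :: "real \<Rightarrow> real" and E0 :: real and n :: nat
  assumes "0 < E0"
    and "standing_assms phi n"
    and "n \<le> 3"
  shows "\<exists>\<delta>>0. \<forall>V. E0 - \<delta> < V \<and> V < E0 \<longrightarrow>
           \<bar>xi (1/2) E0 phi V / xi (-1/2) E0 phi V * (zeta E0 phi V / xi (-1/2) E0 phi V)\<bar> < 4/5"
proof -
  from assms(2) obtain D :: "nat \<Rightarrow> real \<Rightarrow> real" where
    D0: "\<forall>x\<in>{0..1}. D 0 x = phi x"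
    and Dd: "\<forall>k. \<forall>x\<in>{0..1}. (D k has_real_derivative D (Suc k) x) (at x within {0..1})"
    and Dz: "\<forall>k<n. D k 0 = 0" and Dn: "D n 0 > 0"
    unfolding standing_assms_def by blast
  interpret stdphi phi n D by (unfold_locales) (use D0 Dd Dz Dn in auto)
  have lb: "\<bar>(2*real n+1)/(2*real n+3)\<bar> < 4/5"
  proof -
    have "real n \<le> 3" using assms(3) by simp
    then show ?thesis by (simp add: divide_less_eq)
  qed
  have ev1: "\<forall>\<^sub>F a in at_right 0. \<bar>Rf a\<bar> < 4/5"
    using order_tendstoD(2)[OF tendsto_rabs[OF Rf_lim] lb] .
  have ev2: "\<forall>\<^sub>F a in at_right 0. 0 < Ptil a"
    using order_tendstoD(1)[OF cont_at0[OF Ptil_cont] Ptil0_pos] .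
  from eventually_conj[OF ev1 ev2] obtain b where b: "b > 0"
    and bb: "\<And>y. 0 < y \<Longrightarrow> y < b \<Longrightarrow> \<bar>Rf y\<bar> < 4/5 \<and> 0 < Ptil y"
    unfolding eventually_at_right_field by auto
  define \<delta> where "\<delta> = E0 * min b (1/2)"
  have dpos: "\<delta> > 0" unfolding \<delta>_def using b assms(1) by simp
  show ?thesis
  proof (intro exI[of _ \<delta>] conjI allI impI dpos)
    fix V assume V: "E0 - \<delta> < V \<and> V < E0"
    define a where "a = 1 - V/E0"
    have aa: "a = (E0-V)/E0" using assms(1) by (simp add: a_def field_simps)
    have a0: "0 < a" unfolding aa using V assms(1) by simp
    have m1: "E0 * min b (1/2) \<le> E0 * b" using assms(1) by (intro mult_left_mono) auto
    have m2: "E0 * min b (1/2) \<le> E0 * (1/2)" using assms(1) by (intro mult_left_mono) auto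
    have "E0 - V < E0 * b" using V m1 unfolding \<delta>_def by linarith
    then have ab: "a < b" unfolding aa using assms(1) by (simp add: divide_less_eq mult.commute)
    have Vp: "0 < V" using V m2 unfolding \<delta>_def by linarith
    have r: "\<bar>Rf a\<bar> < 4/5" and p: "0 < Ptil a" using bb[OF a0] ab by auto
    have "xi (1/2) E0 phi V / xi (-1/2) E0 phi V * (zeta E0 phi V / xi (-1/2) E0 phi V) = Rf a"
      by (rule ratio_eq[OF assms(1) Vp _ a_def]) (use V p in auto)
    then show "\<bar>xi (1/2) E0 phi V / xi (-1/2) E0 phi V * (zeta E0 phi V / xi (-1/2) E0 phi V)\<bar> < 4/5"
      using r by simp
  qed
qed


end
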